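(* Consider an instance with $n$ agents, $m$ indivisible items and binary additive valuations (notation as in the context). For any two stable allocations $\chi,\chi'$ with profiles $(h_1,\dots,h_n)$ and $(h'_1,\dots,h'_n)$, we have $|h_i-h'_i|\le 1$ for every agent $i\in[n]$; i.e. the Chebyshev distance between $\mathbf{p}(\chi)$ and $\mathbf{p}(\chi')$ is at most $1$.
   Context: Agents $[n]$, items $[m]$. Each agent $i$ has a set $L_i\subseteq[m]$ of liked items and valuation $v_i(S)=|S\cap L_i|$. An allocation $\chi=(\chi_1,\dots,\chi_n)$ is a tuple of pairwise disjoint subsets of $[m]$; it is clean if $\chi_i\subseteq L_i$ for all $i$, and max-USW if it maximizes $\sum_i v_i(\chi_i)$. Throughout, "allocation" means a clean max-USW allocation. Profile: $\mathbf{p}(\chi)=(h_1,\dots,h_n)$, $h_i=|\chi_i|$. Given $\chi$, form a directed graph on $[n]$ with an arc $(i,i')$, $i\ne i'$, whenever some $o\in\chi_i$ has $o\in L_{i'}$; $\chi$ admits a transfer $u\to v$ if there is a simple directed path from $u$ to $v$ with at least one arc. A transfer $u\to v$ is narrowing if $h_u\ge h_v+2$; $\chi$ is stable if it admits no narrowing transfer. *)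

theory Defs
  imports Main
begin

text \<open>Agents are 0..<n, items are 0..<m. L i is the set of items liked by agent i.
  An allocation is a function chi from agents to item sets.\<close>

definition valuation :: "(nat \<Rightarrow> nat set) \<Rightarrow> nat \<Rightarrow> nat set \<Rightarrow> nat" where
  "valuation L i S = card (S \<inter> L i)"

definition is_allocation :: "nat \<Rightarrow> nat \<Rightarrow> (nat \<Rightarrow> nat set) \<Rightarrow> bool" where
  "is_allocation n m chi \<longleftrightarrow>
     (\<forall>i<n. chi i \<subseteq> {..<m}) \<and>
     (\<forall>i<n. \<forall>j<n. i \<noteq> j \<longrightarrow> chi i \<inter> chi j = {})"

definition is_clean :: "nat \<Rightarrow> (nat \<Rightarrow> nat set) \<Rightarrow> (nat \<Rightarrow> nat set) \<Rightarrow> bool" where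
  "is_clean n L chi \<longleftrightarrow> (\<forall>i<n. chi i \<subseteq> L i)"

definition usw :: "nat \<Rightarrow> (nat \<Rightarrow> nat set) \<Rightarrow> (nat \<Rightarrow> nat set) \<Rightarrow> nat" where
  "usw n L chi = (\<Sum>i<n. valuation L i (chi i))"

definition is_max_usw :: "nat \<Rightarrow> nat \<Rightarrow> (nat \<Rightarrow> nat set) \<Rightarrow> (nat \<Rightarrow> nat set) \<Rightarrow> bool" where
  "is_max_usw n m L chi \<longleftrightarrow> is_allocation n m chi \<and>
     (\<forall>psi. is_allocation n m psi \<longrightarrow> usw n L psi \<le> usw n L chi)"

definition good_allocation :: "nat \<Rightarrow> nat \<Rightarrow> (nat \<Rightarrow> nat set) \<Rightarrow> (nat \<Rightarrow> nat set) \<Rightarrow> bool" where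
  "good_allocation n m L chi \<longleftrightarrow> is_clean n L chi \<and> is_max_usw n m L chi"

definition profile :: "(nat \<Rightarrow> nat set) \<Rightarrow> nat \<Rightarrow> nat" where
  "profile chi i = card (chi i)"

definition arc :: "nat \<Rightarrow> (nat \<Rightarrow> nat set) \<Rightarrow> (nat \<Rightarrow> nat set) \<Rightarrow> nat \<Rightarrow> nat \<Rightarrow> bool" where
  "arc n L chi i i' \<longleftrightarrow> i < n \<and> i' < n \<and> i \<noteq> i' \<and> (\<exists>it\<in>chi i. it \<in> L i')"

definition admits_transfer :: "nat \<Rightarrow> (nat \<Rightarrow> nat set) \<Rightarrow> (nat \<Rightarrow> nat set) \<Rightarrow> nat \<Rightarrow> nat \<Rightarrow> bool" where
  "admits_transfer n L chi u v \<longleftrightarrow>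
     (\<exists>ps. length ps \<ge> 2 \<and> distinct ps \<and> hd ps = u \<and> last ps = v \<and>
        (\<forall>k. Suc k < length ps \<longrightarrow> arc n L chi (ps ! k) (ps ! Suc k)))"

definition narrowing_transfer :: "nat \<Rightarrow> (nat \<Rightarrow> nat set) \<Rightarrow> (nat \<Rightarrow> nat set) \<Rightarrow> nat \<Rightarrow> nat \<Rightarrow> bool" where
  "narrowing_transfer n L chi u v \<longleftrightarrow>
     admits_transfer n L chi u v \<and> profile chi u \<ge> profile chi v + 2"

definition stable :: "nat \<Rightarrow> (nat \<Rightarrow> nat set) \<Rightarrow> (nat \<Rightarrow> nat set) \<Rightarrow> bool" where
  "stable n L chi \<longleftrightarrow> (\<forall>u<n. \<forall>v<n. \<not> narrowing_transfer n L chi u v)"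

end

theory Submission
  imports Defs
begin

lemma path_exists:
  assumes "R\<^sup>*\<^sup>* u v"
  shows "\<exists>ps. ps \<noteq> [] \<and> distinct ps \<and> hd ps = u \<and> last ps = v \<and> successively R ps"
  using assms
proof (induction rule: rtranclp_induct)
  case base
  then show ?case by (intro exI[of _ "[u]"]) auto
next
  case (step y z)
  then obtain ps where ps: "ps \<noteq> []" "distinct ps" "hd ps = u" "last ps = y" "successively R ps"
    by blast
  show ?case
  proof (cases "z \<in> set ps")
    case True
    then obtain xs ys where xs: "ps = xs @ z # ys" by (meson split_list)
    have s1: "successively R xs" and s2: "xs \<noteq> [] \<longrightarrow> R (last xs) z"
      using ps(5) unfolding xs by (auto simp: successively_append_iff)
    have "successively R (xs @ [z])"
      using s1 s2 by (auto simp: successively_append_iff)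
    moreover have "distinct (xs @ [z])" using ps(2) xs by auto
    moreover have "hd (xs @ [z]) = u" using ps(3) xs by (cases xs) auto
    ultimately show ?thesis by (intro exI[of _ "xs @ [z]"]) auto
  next
    case False
    have "successively R (ps @ [z])"
      using ps step(2) by (auto simp: successively_append_iff)
    then show ?thesis using ps False by (intro exI[of _ "ps @ [z]"]) auto
  qed
qed

lemma transfer_from_path:
  assumes "ps \<noteq> []" "distinct ps" "hd ps = u" "last ps = v" "successively R ps" "u \<noteq> v"
    and "\<And>a b. R a b \<Longrightarrow> arc n L chi a b"
  shows "admits_transfer n L chi u v"
proof -
  have "length ps \<noteq> 1"
  proof
    assume "length ps = 1"
    then obtain x where "ps = [x]" by (cases ps) auto
    then show False using assms by auto
  qed
  moreover have "length ps \<noteq> 0" using assms(1) by simp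
  ultimately have "length ps \<ge> 2" by linarith
  moreover have "\<forall>k. Suc k < length ps \<longrightarrow> arc n L chi (ps ! k) (ps ! Suc k)"
    using assms(5,7) successively_nth by blast
  ultimately show ?thesis unfolding admits_transfer_def using assms by blast
qed

lemma one_side:
  fixes n m :: nat and L chi chi' :: "nat \<Rightarrow> nat set"
  assumes "\<forall>i<n. L i \<subseteq> {..<m}"
    and g1: "good_allocation n m L chi" and st1: "stable n L chi"
    and g2: "good_allocation n m L chi'" and st2: "stable n L chi'"
    and u: "u < n" and big: "profile chi u \<ge> profile chi' u + 2"
  shows False
proof -
  define D where "D = (\<lambda>a b. a < n \<and> b < n \<and> a \<noteq> b \<and> (\<exists>it. it \<in> chi a \<and> it \<in> chi' b))"
  define R where "R = {a. a < n \<and> D\<^sup>*\<^sup>* u a}"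
  have c1: "\<forall>i<n. chi i \<subseteq> L i" and c2: "\<forall>i<n. chi' i \<subseteq> L i"
    using g1 g2 unfolding good_allocation_def is_clean_def by auto
  have a1: "is_allocation n m chi" and a2: "is_allocation n m chi'"
    and mx: "\<And>psi. is_allocation n m psi \<Longrightarrow> usw n L psi \<le> usw n L chi'"
    using g1 g2 unfolding good_allocation_def is_max_usw_def by auto
  define psi where "psi = (\<lambda>a. if a \<in> R then chi a else chi' a)"
  have closed: "b \<in> R" if "a \<in> R" "D a b" for a b
    using that unfolding R_def D_def
    by (auto intro: rtranclp.rtrancl_into_rtrancl[where r=D, unfolded D_def])
  have "is_allocation n m psi"
    unfolding is_allocation_def
  proof (intro conjI allI impI)
    fix i assume "i < n" then show "psi i \<subseteq> {..<m}"
      using a1 a2 unfolding is_allocation_def psi_def by auto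
  next
    fix i j assume ij: "i < n" "j < n" "i \<noteq> j"
    show "psi i \<inter> psi j = {}"
    proof (cases "i \<in> R"; cases "j \<in> R")
      assume "i \<in> R" "j \<notin> R"
      then have "\<not> D i j" using closed by blast
      then show ?thesis using ij \<open>i \<in> R\<close> \<open>j \<notin> R\<close> unfolding psi_def D_def by auto
    next
      assume "i \<notin> R" "j \<in> R"
      then have "\<not> D j i" using closed by blast
      then show ?thesis using ij \<open>i \<notin> R\<close> \<open>j \<in> R\<close> unfolding psi_def D_def by auto
    qed (use ij a1 a2 in \<open>auto simp: is_allocation_def psi_def\<close>)
  qed
  then have le: "usw n L psi \<le> usw n L chi'" by (rule mx)
  have v1: "valuation L i (chi i) = profile chi i" if "i < n" for i
    using c1 that unfolding valuation_def profile_def by (simp add: Int_absorb2)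
  have v2: "valuation L i (chi' i) = profile chi' i" if "i < n" for i
    using c2 that unfolding valuation_def profile_def by (simp add: Int_absorb2)
  have RS: "R \<subseteq> {..<n}" unfolding R_def by auto
  have fin: "finite R" using RS finite_subset by blast
  have uR: "u \<in> R" unfolding R_def using u by auto
  have "usw n L psi = (\<Sum>i\<in>R. profile chi i) + (\<Sum>i\<in>{..<n}-R. profile chi' i)"
  proof -
    have "usw n L psi = (\<Sum>i\<in>{..<n}. if i \<in> R then profile chi i else profile chi' i)"
      unfolding usw_def psi_def using v1 v2 by (intro sum.cong) auto
    also have "\<dots> = (\<Sum>i\<in>{..<n} \<inter> R. profile chi i) + (\<Sum>i\<in>{..<n}-R. profile chi' i)"
      by (simp add: sum.If_cases Diff_eq)
    also have "{..<n} \<inter> R = R" using RS by auto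
    finally show ?thesis .
  qed
  moreover have "usw n L chi' = (\<Sum>i\<in>R. profile chi' i) + (\<Sum>i\<in>{..<n}-R. profile chi' i)"
  proof -
    have "usw n L chi' = (\<Sum>i\<in>{..<n}. profile chi' i)"
      unfolding usw_def using v2 by (intro sum.cong) auto
    also have "\<dots> = (\<Sum>i\<in>R. profile chi' i) + (\<Sum>i\<in>{..<n}-R. profile chi' i)"
      using RS by (metis finite_lessThan sum.subset_diff add.commute)
    finally show ?thesis .
  qed
  ultimately have sle: "(\<Sum>i\<in>R. profile chi i) \<le> (\<Sum>i\<in>R. profile chi' i)" using le by linarith
  obtain v where vR: "v \<in> R" and vlt: "profile chi v < profile chi' v"
  proof (rule ccontr)
    assume "\<not> thesis"
    with that have ge: "\<forall>v\<in>R. profile chi' v \<le> profile chi v" by (meson not_less)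
    have "(\<Sum>i\<in>R. profile chi i) = profile chi u + (\<Sum>i\<in>R-{u}. profile chi i)"
      using fin uR by (simp add: sum.remove)
    moreover have "(\<Sum>i\<in>R. profile chi' i) = profile chi' u + (\<Sum>i\<in>R-{u}. profile chi' i)"
      using fin uR by (simp add: sum.remove)
    moreover have "(\<Sum>i\<in>R-{u}. profile chi' i) \<le> (\<Sum>i\<in>R-{u}. profile chi i)"
      using ge by (intro sum_mono) auto
    ultimately show False using sle big by linarith
  qed
  have vn: "v < n" and Dp: "D\<^sup>*\<^sup>* u v" using vR unfolding R_def by auto
  have uv: "u \<noteq> v" using big vlt by auto
  obtain ps where ps: "ps \<noteq> []" "distinct ps" "hd ps = u" "last ps = v" "successively D ps"
    using path_exists[OF Dp] by blast
  have t1: "admits_transfer n L chi u v"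
    by (rule transfer_from_path[OF ps uv]) (use c2 in \<open>auto simp: D_def arc_def\<close>)
  have "successively (\<lambda>x y. D y x) (rev ps)" using ps(5) by simp
  moreover have "hd (rev ps) = v" "last (rev ps) = u" using ps by (auto simp: hd_rev last_rev)
  ultimately have t2: "admits_transfer n L chi' v u"
    using ps uv
    by (intro transfer_from_path[of "rev ps" _ _ "\<lambda>x y. D y x"])
       (use c1 in \<open>auto simp: D_def arc_def\<close>)
  have "profile chi u \<le> profile chi v + 1"
    using st1 t1 u vn unfolding stable_def narrowing_transfer_def by force
  moreover have "profile chi' v \<le> profile chi' u + 1"
    using st2 t2 u vn unfolding stable_def narrowing_transfer_def by force
  ultimately show False using big vlt by linarith
qed

theorem theorem2:
  fixes n m :: nat and L chi chi' :: "nat \<Rightarrow> nat set"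
  assumes "\<forall>i<n. L i \<subseteq> {..<m}"
    and "good_allocation n m L chi" and "stable n L chi"
    and "good_allocation n m L chi'" and "stable n L chi'"
  shows "\<forall>i<n. \<bar>int (profile chi i) - int (profile chi' i)\<bar> \<le> 1"
proof (intro allI impI)
  fix i assume i: "i < n"
  have "\<not> profile chi i \<ge> profile chi' i + 2"
    using one_side[OF assms i] by blast
  moreover have "\<not> profile chi' i \<ge> profile chi i + 2"
    using one_side[OF assms(1,4,5,2,3) i] by blast
  ultimately show "\<bar>int (profile chi i) - int (profile chi' i)\<bar> \<le> 1" by linarith
qed

end
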